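(* In the polytope-code decoding setting described in the context, for every vertex $v_i \in V^*$ we have $\bar y_i = y_i$.
   Context: Let $T\ge 1$, $N > T$, $N_0\ge1$ be integers. An eligible $(N,N-T)$-generator matrix is an $N\times(N-T)$ matrix $A=(A_{ij})$ with nonnegative integer entries whose first $N-T$ rows form the identity matrix and such that every $(N-T)\times(N-T)$ submatrix obtained by choosing $N-T$ rows is nonsingular. Given $x_1,\dots,x_{N-T}\in\mathbb{Z}^{N_0}$, the transmitted codewords are $y_i = \sum_{j=1}^{N-T} A_{ij} x_j \in \mathbb{Z}^{N_0}$, $i\in[N]$. The decoder receives $\bar y_1,\dots,\bar y_N\in\mathbb{Z}^{N_0}$, where $\bar y_i = y_i$ for all $i$ outside some unknown set of at most $T$ indices, and it knows exactly the values $F_{ij} = \langle y_i,y_j\rangle$ for all $i,j\in[N]$. The syndrome graph $G$ has vertices $v_1,\dots,v_N$; for $i\ne j$ there is an edge between $v_i$ and $v_j$ iff $\langle \bar y_i,\bar y_j\rangle = F_{ij}$, and there is a self-loop at $v_i$ iff $\langle \bar y_i,\bar y_i\rangle = F_{ii}$. Let $\hat G$ be obtained from $G$ by deleting every vertex without a self-loop (and its incident edges). Let $V'$ be the set of vertices of $\hat G$ that belong to some clique (set of pairwise adjacent distinct vertices) of size at least $N-T$ in $\hat G$. Let $V^*$ be the set of $v_i\in V'$ such that $v_i$ is adjacent in $\hat G$ to every $v_j \in V'$ (adjacency of $v_i$ to itself being given by its self-loop). *)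

theory Defs
  imports "Jordan_Normal_Form.Determinant"
begin

text \<open>Vectors in Z^N0 are functions nat => int; only components k < N0 matter.
  Indices of rows/codewords are 0..N-1, information symbols 0..N-T-1.\<close>

definition ip :: "nat \<Rightarrow> (nat \<Rightarrow> int) \<Rightarrow> (nat \<Rightarrow> int) \<Rightarrow> int" where
  "ip N0 u v = (\<Sum>k<N0. u k * v k)"

definition eligible_generator :: "nat \<Rightarrow> nat \<Rightarrow> (nat \<Rightarrow> nat \<Rightarrow> nat) \<Rightarrow> bool" where
  "eligible_generator N K A \<longleftrightarrow>
     (\<forall>i<K. \<forall>j<K. A i j = (if i = j then 1 else 0)) \<and>
     (\<forall>S. S \<subseteq> {..<N} \<and> card S = K \<longrightarrow>
        det (mat K K (\<lambda>(r, c). int (A (sorted_list_of_set S ! r) c))) \<noteq> 0)"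

definition codeword :: "nat \<Rightarrow> (nat \<Rightarrow> nat \<Rightarrow> nat) \<Rightarrow> (nat \<Rightarrow> nat \<Rightarrow> int) \<Rightarrow> nat \<Rightarrow> nat \<Rightarrow> int" where
  "codeword K A x i = (\<lambda>k. \<Sum>j<K. int (A i j) * x j k)"

definition syn_adj :: "nat \<Rightarrow> (nat \<Rightarrow> nat \<Rightarrow> int) \<Rightarrow> (nat \<Rightarrow> nat \<Rightarrow> int) \<Rightarrow> nat \<Rightarrow> nat \<Rightarrow> bool" where
  "syn_adj N0 F ybar i j \<longleftrightarrow> ip N0 (ybar i) (ybar j) = F i j"

text \<open>Vertex set of G-hat: vertices with a self-loop.\<close>
definition hat_vertices :: "nat \<Rightarrow> nat \<Rightarrow> (nat \<Rightarrow> nat \<Rightarrow> int) \<Rightarrow> (nat \<Rightarrow> nat \<Rightarrow> int) \<Rightarrow> nat set" where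
  "hat_vertices N N0 F ybar = {i. i < N \<and> syn_adj N0 F ybar i i}"

definition hat_clique :: "nat \<Rightarrow> nat \<Rightarrow> (nat \<Rightarrow> nat \<Rightarrow> int) \<Rightarrow> (nat \<Rightarrow> nat \<Rightarrow> int) \<Rightarrow> nat set \<Rightarrow> bool" where
  "hat_clique N N0 F ybar C \<longleftrightarrow> C \<subseteq> hat_vertices N N0 F ybar \<and>
     (\<forall>i\<in>C. \<forall>j\<in>C. i \<noteq> j \<longrightarrow> syn_adj N0 F ybar i j)"

definition V_prime :: "nat \<Rightarrow> nat \<Rightarrow> nat \<Rightarrow> (nat \<Rightarrow> nat \<Rightarrow> int) \<Rightarrow> (nat \<Rightarrow> nat \<Rightarrow> int) \<Rightarrow> nat set" where
  "V_prime N T N0 F ybar = {i \<in> hat_vertices N N0 F ybar.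
     \<exists>C. hat_clique N N0 F ybar C \<and> i \<in> C \<and> card C \<ge> N - T}"

definition V_star :: "nat \<Rightarrow> nat \<Rightarrow> nat \<Rightarrow> (nat \<Rightarrow> nat \<Rightarrow> int) \<Rightarrow> (nat \<Rightarrow> nat \<Rightarrow> int) \<Rightarrow> nat set" where
  "V_star N T N0 F ybar = {i \<in> V_prime N T N0 F ybar.
     \<forall>j \<in> V_prime N T N0 F ybar. syn_adj N0 F ybar i j}"

end

theory Submission
  imports Defs
begin

lemma lin_zero:
  fixes M :: "int mat"
  assumes "M \<in> carrier_mat K K" "det M \<noteq> 0"
    and "\<forall>r<K. (\<Sum>c<K. M $$ (r,c) * w c) = 0"
  shows "\<forall>c<K. w c = 0"
proof -
  let ?v = "vec K w"
  have "M *\<^sub>v ?v = 0\<^sub>v K"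
  proof (rule eq_vecI)
    fix r assume r: "r < dim_vec (0\<^sub>v K :: int vec)"
    hence rK: "r < K" by simp
    have "(M *\<^sub>v ?v) $ r = row M r \<bullet> ?v" using assms(1) rK by auto
    also have "\<dots> = (\<Sum>c<K. M $$ (r,c) * w c)"
      using assms(1) rK unfolding scalar_prod_def
      by (auto intro!: sum.cong simp: lessThan_atLeast0)
    finally show "(M *\<^sub>v ?v) $ r = 0\<^sub>v K $ r" using assms(3) rK by simp
  qed (use assms(1) in auto)
  hence "?v = 0\<^sub>v K" using det_0_iff_vec_prod_zero[OF assms(1)] assms(2) vec_carrier by blast
  thus ?thesis by (metis index_vec index_zero_vec(1))
qed

lemma ip_codeword:
  "ip N0 d (codeword K A x i) = (\<Sum>c<K. int (A i c) * (\<Sum>k<N0. d k * x c k))"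
  unfolding ip_def codeword_def
  by (simp add: sum_distrib_left sum_distrib_right mult_ac sum.swap[of _ "{..<K}"])

theorem mainTheorem5:
  fixes N T N0 :: nat
    and A :: "nat \<Rightarrow> nat \<Rightarrow> nat"
    and x ybar :: "nat \<Rightarrow> nat \<Rightarrow> int"
    and F :: "nat \<Rightarrow> nat \<Rightarrow> int"
    and E :: "nat set"
  assumes "T \<ge> 1" and "N > T" and "N0 \<ge> 1"
    and "eligible_generator N (N - T) A"
    and "\<forall>i<N. \<forall>j<N. F i j = ip N0 (codeword (N - T) A x i) (codeword (N - T) A x j)"
    and "E \<subseteq> {..<N}" and "card E \<le> T"
    and "\<forall>i<N. i \<notin> E \<longrightarrow> (\<forall>k<N0. ybar i k = codeword (N - T) A x i k)"
  shows "\<forall>i \<in> V_star N T N0 F ybar. \<forall>k<N0. ybar i k = codeword (N - T) A x i k"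
proof
  fix i assume iV: "i \<in> V_star N T N0 F ybar"
  define K where "K = N - T"
  define y where "y = codeword K A x"
  define G where "G = {..<N} - E"
  have ipcong: "ip N0 u v = ip N0 u' v'" if "\<forall>k<N0. u k = u' k" "\<forall>k<N0. v k = v' k" for u v u' v'
    using that unfolding ip_def by (auto intro!: sum.cong)
  have cardG: "card G \<ge> K"
  proof -
    have "card G = N - card E" unfolding G_def using assms(6)
      by (simp add: card_Diff_subset finite_subset)
    thus ?thesis unfolding K_def using assms(7) by simp
  qed
  have goodj: "\<forall>k<N0. ybar j k = y j k" if "j \<in> G" for j
    using assms(8) that unfolding G_def y_def K_def by auto
  have Fy: "F a b = ip N0 (y a) (y b)" if "a < N" "b < N" for a b
    using assms(5) that unfolding y_def K_def by auto
  have Ghat: "G \<subseteq> hat_vertices N N0 F ybar"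
  proof
    fix j assume j: "j \<in> G"
    hence jN: "j < N" unfolding G_def by auto
    show "j \<in> hat_vertices N N0 F ybar"
      unfolding hat_vertices_def syn_adj_def using jN Fy[OF jN jN] ipcong goodj[OF j] by auto
  qed
  have Gclique: "hat_clique N N0 F ybar G"
    unfolding hat_clique_def
  proof (intro conjI Ghat ballI impI)
    fix a b assume a: "a \<in> G" and b: "b \<in> G"
    hence "a < N" "b < N" unfolding G_def by auto
    thus "syn_adj N0 F ybar a b" unfolding syn_adj_def using Fy ipcong goodj[OF a] goodj[OF b] by auto
  qed
  have GV: "G \<subseteq> V_prime N T N0 F ybar"
    unfolding V_prime_def using Ghat Gclique cardG unfolding K_def by blast
  have iVp: "i \<in> V_prime N T N0 F ybar" and adj: "\<forall>j\<in>V_prime N T N0 F ybar. syn_adj N0 F ybar i j"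
    using iV unfolding V_star_def by auto
  hence iN: "i < N" and self: "syn_adj N0 F ybar i i"
    unfolding V_prime_def hat_vertices_def by auto
  define d where "d k = ybar i k - y i k" for k
  have orth: "ip N0 d (y j) = 0" if "j \<in> G" for j
  proof -
    have jN: "j < N" using that unfolding G_def by auto
    have "ip N0 (ybar i) (ybar j) = F i j" using adj GV that unfolding syn_adj_def by auto
    also have "\<dots> = ip N0 (y i) (y j)" using Fy iN jN by simp
    finally have "ip N0 (ybar i) (y j) = ip N0 (y i) (y j)"
      using ipcong[of "ybar i" "ybar i" "ybar j" "y j"] goodj[OF that] by auto
    thus ?thesis unfolding ip_def d_def by (simp add: algebra_simps sum_subtractf)
  qed
  obtain S where S: "S \<subseteq> G" "card S = K"
    using obtain_subset_with_card_n[OF cardG] by metis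
  have finG: "finite G" unfolding G_def by simp
  have SN: "S \<subseteq> {..<N}" using S unfolding G_def by auto
  define s where "s = sorted_list_of_set S"
  have lens: "length s = K" using S finG s_def by (simp add: finite_subset)
  have sS: "s ! r \<in> S" if "r < K" for r
    using that lens S finG unfolding s_def
    by (metis finite_subset nth_mem set_sorted_list_of_set)
  define M where "M = mat K K (\<lambda>(r, c). int (A (s ! r) c))"
  have detM: "det M \<noteq> 0" using assms(4) SN S(2) unfolding M_def s_def K_def eligible_generator_def by blast
  define w where "w c = (\<Sum>k<N0. d k * x c k)" for c
  have "\<forall>c<K. w c = 0"
  proof (rule lin_zero[of M K])
    show "M \<in> carrier_mat K K" unfolding M_def by simp
    show "det M \<noteq> 0" by fact
    show "\<forall>r<K. (\<Sum>c<K. M $$ (r, c) * w c) = 0"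
    proof (intro allI impI)
      fix r assume r: "r < K"
      have "(\<Sum>c<K. M $$ (r, c) * w c) = (\<Sum>c<K. int (A (s ! r) c) * w c)"
        unfolding M_def using r by (auto intro!: sum.cong)
      also have "\<dots> = ip N0 d (y (s ! r))" unfolding y_def ip_codeword w_def by simp
      also have "\<dots> = 0" using orth sS[OF r] S(1) by auto
      finally show "(\<Sum>c<K. M $$ (r, c) * w c) = 0" .
    qed
  qed
  hence odi: "ip N0 d (y i) = 0" unfolding y_def ip_codeword w_def[symmetric] by simp
  have "ip N0 (ybar i) (ybar i) = ip N0 (y i) (y i)" using self Fy[OF iN iN] unfolding syn_adj_def by simp
  moreover have "ip N0 (ybar i) (ybar i) = ip N0 (y i) (y i) + 2 * ip N0 d (y i) + ip N0 d d"
    unfolding ip_def d_def by (simp add: algebra_simps sum.distrib sum_distrib_left sum_subtractf)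
  ultimately have "ip N0 d d = 0" using odi by simp
  hence "(\<Sum>k<N0. d k * d k) = 0" unfolding ip_def .
  hence "\<forall>k\<in>{..<N0}. d k * d k = 0" by (subst (asm) sum_nonneg_eq_0_iff) auto
  thus "\<forall>k<N0. ybar i k = codeword (N - T) A x i k" unfolding d_def y_def K_def by simp
qed

end
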